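(* Let $X_1,X_2,\dots,X_n$ be i.i.d. real random variables. Fix $q$ with $0<q<1$ and let $q^*=2-q$. Assume $\mathbb{E}\exp_{q^*}(aX_1)$ is finite for small positive $a$. For $a>0$ with $0<\mathbb{E}\exp_{q^*}(aX_1)<\infty$ let $\theta(a)=\left[\mathbb{E}\exp_{q^*}(aX_1)\right]^{1-q}a$ (a strictly increasing function of $a$), let $\overline\theta=\sup_{a>0}\theta(a)\le+\infty$, and for $0<\theta<\overline\theta$ define $\Phi(\theta)=\ln_q\mathbb{E}\exp_{q^*}(aX_1)$, where $a$ is the value with $\theta(a)=\theta$. Then for all $x$, $$\mathrm{Prob}\left(\frac1n\sum_{k=1}^nX_k\ge x\right)\le\left[\exp_q(-I(x))\right]^n,$$ where $$I(x)=\sup_{0<\theta<\overline\theta}\{\theta x-\Phi(\theta)\}.$$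
   Context: For $q\in(0,2)$, $q\ne1$: $\ln_q(u)=\frac{1}{1-q}(u^{1-q}-1)$ for $u>0$, and $\exp_q(u)=[1+(1-q)u]_+^{1/(1-q)}$ for real $u$ (value in $[0,+\infty]$), where $[u]_+=\max(u,0)$. *)

theory Defs
  imports "HOL-Probability.Probability"
begin

text \<open>Tsallis q-logarithm (for u > 0, q \<noteq> 1).\<close>
definition lnq :: "real \<Rightarrow> real \<Rightarrow> real" where
  "lnq q u = (u powr (1 - q) - 1) / (1 - q)"

definition expq :: "real \<Rightarrow> real \<Rightarrow> ennreal" where
  "expq q u = (if q = 1 then ennreal (exp u)
     else if 1 + (1 - q) * u > 0 then ennreal ((1 + (1 - q) * u) powr (1 / (1 - q)))
     else if q < 1 then 0 else \<infinity>)"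

text \<open>Extension to extended reals by the limits at \<plusminus>\<infinity>.\<close>
definition expq_ereal :: "real \<Rightarrow> ereal \<Rightarrow> ennreal" where
  "expq_ereal q t = (case t of ereal u \<Rightarrow> expq q u | PInfty \<Rightarrow> \<infinity> | MInfty \<Rightarrow> 0)"

definition mgfq :: "'a measure \<Rightarrow> ('a \<Rightarrow> real) \<Rightarrow> real \<Rightarrow> real \<Rightarrow> ennreal" where
  "mgfq M Y q a = (\<integral>\<^sup>+ \<omega>. expq (2 - q) (a * Y \<omega>) \<partial>M)"

definition admiss :: "'a measure \<Rightarrow> ('a \<Rightarrow> real) \<Rightarrow> real \<Rightarrow> real set" where
  "admiss M Y q = {a. a > 0 \<and> 0 < mgfq M Y q a \<and> mgfq M Y q a < \<infinity>}"

definition thetaq :: "'a measure \<Rightarrow> ('a \<Rightarrow> real) \<Rightarrow> real \<Rightarrow> real \<Rightarrow> real" where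
  "thetaq M Y q a = (enn2real (mgfq M Y q a)) powr (1 - q) * a"

definition theta_bar :: "'a measure \<Rightarrow> ('a \<Rightarrow> real) \<Rightarrow> real \<Rightarrow> ereal" where
  "theta_bar M Y q = (SUP a\<in>admiss M Y q. ereal (thetaq M Y q a))"

definition Phiq :: "'a measure \<Rightarrow> ('a \<Rightarrow> real) \<Rightarrow> real \<Rightarrow> real \<Rightarrow> real" where
  "Phiq M Y q \<theta> = lnq q (enn2real (mgfq M Y q
      (THE a. a \<in> admiss M Y q \<and> thetaq M Y q a = \<theta>)))"

definition Iq :: "'a measure \<Rightarrow> ('a \<Rightarrow> real) \<Rightarrow> real \<Rightarrow> real \<Rightarrow> ereal" where
  "Iq M Y q x = (SUP \<theta>\<in>{\<theta>. 0 < \<theta> \<and> ereal \<theta> < theta_bar M Y q}.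
                    ereal (\<theta> * x - Phiq M Y q \<theta>))"

end

theory Submission
  imports Defs "HOL-Real_Asymp.Real_Asymp"
begin


lemma expq_star:
  assumes "0 < q" "q < 1"
  shows "expq (2-q) u = (if 1-(1-q)*u > 0 then ennreal((1-(1-q)*u) powr (-1/(1-q))) else \<infinity>)"
proof -
  have e1: "1 + (1 - (2 - q)) * u = 1-(1-q)*u" by (simp add: algebra_simps)
  have e2: "1 / (1 - (2 - q)) = -1/(1-q)" using assms by (simp add: field_simps)
  show ?thesis unfolding expq_def using assms by (simp only: e1 e2) auto
qed

lemma expq_q:
  assumes "0 < q" "q < 1"
  shows "expq q u = ennreal ((max 0 (1+(1-q)*u)) powr (1/(1-q)))"
  unfolding expq_def using assms by auto

definition hq :: "real \<Rightarrow> real \<Rightarrow> real \<Rightarrow> ennreal" where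
  "hq q a y = (if 1/a - (1-q)*y > 0 then ennreal ((1/a-(1-q)*y) powr (-1/(1-q))) else \<infinity>)"

lemma hq_eq:
  assumes "0 < q" "q < 1" "a > 0"
  shows "ennreal (a powr (1/(1-q))) * expq (2-q) (a*y) = hq q a y"
proof -
  have iff: "1-(1-q)*(a*y) > 0 \<longleftrightarrow> 1/a - (1-q)*y > 0" using assms
    by (simp add: field_simps)
  show ?thesis
  proof (cases "1/a - (1-q)*y > 0")
    case True
    have "1/a - (1-q)*y = (1-(1-q)*(a*y)) / a" using assms by (simp add: field_simps)
    hence "(1/a - (1-q)*y) powr (-1/(1-q)) = (1-(1-q)*(a*y)) powr (-1/(1-q)) / a powr (-1/(1-q))"
      using True iff assms by (simp add: powr_divide)
    also have "\<dots> = a powr (1/(1-q)) * (1-(1-q)*(a*y)) powr (-1/(1-q))"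
      using assms by (simp add: powr_minus_divide divide_simps powr_minus)
    finally show ?thesis using True iff assms
      by (simp add: expq_star hq_def ennreal_mult[symmetric])
  next
    case False
    then show ?thesis using iff assms by (simp add: expq_star hq_def ennreal_mult_top)
  qed
qed

lemma hq_mono:
  assumes "0 < q" "q < 1" "0 < a" "a \<le> b"
  shows "hq q a y \<le> hq q b y"
proof (cases "1/b - (1-q)*y > 0")
  case True
  have "1/b \<le> 1/a" using assms by (simp add: frac_le)
  hence "1/b - (1-q)*y \<le> 1/a - (1-q)*y" by simp
  moreover have "-1/(1-q) < 0" using assms by simp
  ultimately have "(1/a - (1-q)*y) powr (-1/(1-q)) \<le> (1/b - (1-q)*y) powr (-1/(1-q))"
    using True by (intro powr_mono2') auto
  then show ?thesis using True \<open>1/b - (1-q)*y \<le> 1/a - (1-q)*y\<close> unfolding hq_def by auto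
next
  case False
  then show ?thesis unfolding hq_def by simp
qed

lemma hq_strict:
  assumes "0 < q" "q < 1" "0 < a" "a < b" "1/b - (1-q)*y > 0"
  shows "hq q a y < hq q b y"
proof -
  have "1/b < 1/a" using assms by (simp add: frac_less2)
  hence lt: "1/b - (1-q)*y < 1/a - (1-q)*y" by simp
  have "(1/a - (1-q)*y) powr (-1/(1-q)) < (1/b - (1-q)*y) powr (-1/(1-q))"
    using assms lt by (intro powr_less_mono2_neg) auto
  then show ?thesis using assms lt unfolding hq_def by (auto simp: ennreal_less_iff)
qed

lemma expq_star_le1:
  assumes "0 < q" "q < 1" "u \<le> 0"
  shows "expq (2-q) u \<le> 1"
proof -
  have "1 \<le> 1-(1-q)*u" using assms by (simp add: mult_nonneg_nonpos)
  hence "(1-(1-q)*u) powr (-1/(1-q)) \<le> 1" using assms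
    by (simp add: powr_minus_divide divide_simps ge_one_powr_ge_zero)
  thus ?thesis using assms \<open>1 \<le> 1-(1-q)*u\<close> by (simp add: expq_star)
qed

lemma expq_star_mono:
  assumes "0 < q" "q < 1" "s \<le> t"
  shows "expq (2-q) s \<le> expq (2-q) t"
proof (cases "1-(1-q)* t > 0")
  case True
  have "1-(1-q)* t \<le> 1-(1-q)* s" using assms by (simp add: mult_left_mono)
  hence "(1-(1-q)* s) powr (-1/(1-q)) \<le> (1-(1-q)* t) powr (-1/(1-q))"
    using True assms by (intro powr_mono2') auto
  moreover have "1-(1-q)* s > 0" using True \<open>1-(1-q)* t \<le> 1-(1-q)* s\<close> by linarith
  ultimately show ?thesis using True assms by (simp add: expq_star)
next
  case False
  then show ?thesis using assms by (simp add: expq_star)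
qed

lemma expq_pos: "0 < q \<Longrightarrow> q < 1 \<Longrightarrow> expq (2-q) u > 0"
  by (simp add: expq_star)

lemma expq_meas[measurable]:
  assumes [measurable]: "f \<in> borel_measurable M"
  shows "(\<lambda>x. expq r (f x)) \<in> borel_measurable M"
  unfolding expq_def by (cases "r = 1"; cases "r < 1") simp_all

lemma hq_meas[measurable]:
  assumes [measurable]: "f \<in> borel_measurable M"
  shows "(\<lambda>x. hq q a (f x)) \<in> borel_measurable M"
  unfolding hq_def by measurable



locale qsetup = prob_space M for M :: "'a measure" +
  fixes Y :: "'a \<Rightarrow> real" and q :: real
  assumes Ym[measurable]: "Y \<in> borel_measurable M" and q0: "0 < q" and q1: "q < 1"
begin

definition G :: "real \<Rightarrow> ennreal" where
  "G a = (\<integral>\<^sup>+\<omega>. hq q a (Y \<omega>) \<partial>M)"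

lemma mgf_pos: "mgfq M Y q a > 0"
proof (rule ccontr)
  assume "\<not> mgfq M Y q a > 0"
  hence "mgfq M Y q a = 0" by (simp add: not_less)
  hence "AE \<omega> in M. expq (2-q) (a * Y \<omega>) = 0" unfolding mgfq_def
    by (subst (asm) nn_integral_0_iff_AE) auto
  hence "AE \<omega> in M. False" by eventually_elim (metis expq_pos[OF q0 q1] less_irrefl)
  thus False using AE_False by simp
qed

lemma G_eq: "a > 0 \<Longrightarrow> G a = ennreal (a powr (1/(1-q))) * mgfq M Y q a"
  unfolding G_def mgfq_def
  by (subst nn_integral_cmult[symmetric]) (auto simp: hq_eq[OF q0 q1])

lemma admiss_iff: "a \<in> admiss M Y q \<longleftrightarrow> a > 0 \<and> G a < \<infinity>"
proof -
  { assume "a > 0"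
    hence "G a < \<infinity> \<longleftrightarrow> mgfq M Y q a < \<infinity>"
      using mgf_pos[of a] by (auto simp: G_eq ennreal_mult_less_top top.not_eq_extremum) }
  thus ?thesis unfolding admiss_def using mgf_pos[of a] by auto
qed

lemma theta_G:
  assumes "a \<in> admiss M Y q"
  shows "thetaq M Y q a = enn2real (G a) powr (1-q)"
    and "G a = ennreal (thetaq M Y q a powr (1/(1-q)))"
    and "thetaq M Y q a > 0"
proof -
  have a: "a > 0" and m: "mgfq M Y q a < \<infinity>" "mgfq M Y q a > 0" using assms unfolding admiss_def by auto
  define r where "r = enn2real (mgfq M Y q a)"
  have rpos: "r > 0" using m unfolding r_def by (simp add: enn2real_positive_iff)
  have mr: "mgfq M Y q a = ennreal r" using m unfolding r_def by (simp add: less_top)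
  have pc: "(1/(1-q)) * (1-q) = 1" using q1 by simp
  have "enn2real (G a) = a powr (1/(1-q)) * r" using a rpos by (simp add: G_eq mr enn2real_mult)
  moreover have "(a powr (1/(1-q)) * r) powr (1-q) = (a powr (1/(1-q))) powr (1-q) * r powr (1-q)"
    using rpos a by (intro powr_mult)
  ultimately have "enn2real (G a) powr (1-q) = (a powr (1/(1-q))) powr (1-q) * r powr (1-q)"
    by simp
  also have "\<dots> = a * r powr (1-q)" using a q1 by (simp add: powr_powr pc)
  finally show t: "thetaq M Y q a = enn2real (G a) powr (1-q)"
    unfolding thetaq_def r_def[symmetric] by simp
  show "thetaq M Y q a > 0" unfolding thetaq_def r_def[symmetric] using rpos a by simp
  have "thetaq M Y q a powr (1/(1-q)) = (r powr (1-q)) powr (1/(1-q)) * a powr (1/(1-q))"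
    unfolding thetaq_def r_def[symmetric] using rpos a by (simp add: powr_mult)
  also have "\<dots> = r * a powr (1/(1-q))" using q1 rpos by (simp add: powr_powr)
  finally show "G a = ennreal (thetaq M Y q a powr (1/(1-q)))"
    using a rpos by (simp add: G_eq mr ennreal_mult'' mult.commute)
qed

lemma G_mono: "0 < a \<Longrightarrow> a \<le> b \<Longrightarrow> G a \<le> G b"
  unfolding G_def by (intro nn_integral_mono hq_mono[OF q0 q1]) auto

lemma admiss_down: "b \<in> admiss M Y q \<Longrightarrow> 0 < a \<Longrightarrow> a \<le> b \<Longrightarrow> a \<in> admiss M Y q"
  using G_mono by (auto simp: admiss_iff intro: le_less_trans)

lemma hq_fin_iff: "hq q a y < \<infinity> \<longleftrightarrow> 1/a - (1-q)*y > 0"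
  unfolding hq_def by auto

lemma AE_fin: "b \<in> admiss M Y q \<Longrightarrow> AE \<omega> in M. 1/b - (1-q) * Y \<omega> > 0"
proof -
  assume "b \<in> admiss M Y q"
  hence "G b \<noteq> \<infinity>" by (auto simp: admiss_iff)
  hence "AE \<omega> in M. hq q b (Y \<omega>) \<noteq> \<infinity>" unfolding G_def
    by (intro nn_integral_noteq_infinite) auto
  thus ?thesis by (rule AE_mp) (auto intro!: AE_I2 simp: top.not_eq_extremum hq_def split: if_splits)
qed

lemma G_strict:
  assumes "a \<in> admiss M Y q" "b \<in> admiss M Y q" "a < b"
  shows "G a < G b"
proof -
  have f: "(\<integral>\<^sup>+ x. hq q a (Y x) \<partial>M) \<noteq> \<top>" using assms by (auto simp: admiss_iff G_def)
  have o1: "AE x in M. hq q a (Y x) \<le> hq q b (Y x)" using assms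
    by (intro AE_I2 hq_mono[OF q0 q1]) (auto simp: admiss_def)
  have o2: "\<not> (AE x in M. hq q b (Y x) \<le> hq q a (Y x))"
  proof
    assume "AE x in M. hq q b (Y x) \<le> hq q a (Y x)"
    moreover have "AE x in M. hq q a (Y x) < hq q b (Y x)"
      using AE_fin[OF assms(2)] by eventually_elim (use assms in \<open>auto intro!: hq_strict[OF q0 q1] simp: admiss_def\<close>)
    ultimately have "AE x in M. False" by eventually_elim auto
    thus False using AE_False by simp
  qed
  show ?thesis unfolding G_def
    using nn_integral_less[of "\<lambda>x. hq q a (Y x)" M "\<lambda>x. hq q b (Y x)"] f o1 o2 by simp
qed

lemma theta_strict:
  assumes "a \<in> admiss M Y q" "b \<in> admiss M Y q" "a < b"
  shows "thetaq M Y q a < thetaq M Y q b"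
proof -
  have "G a < G b" by (rule G_strict[OF assms])
  moreover have "G b < \<infinity>" using assms by (auto simp: admiss_iff)
  ultimately have "enn2real (G a) < enn2real (G b)"
    by (simp add: enn2real_less_iff less_top)
  moreover have "enn2real (G a) \<ge> 0" by simp
  ultimately show ?thesis using theta_G(1)[OF assms(1)] theta_G(1)[OF assms(2)] q1
    by (simp add: powr_less_mono2)
qed

lemma theta_inj:
  assumes "a \<in> admiss M Y q" "b \<in> admiss M Y q" "thetaq M Y q a = thetaq M Y q b"
  shows "a = b"
  using theta_strict[OF assms(1,2)] theta_strict[OF assms(2,1)] assms(3)
  by (cases a b rule: linorder_cases) auto

end


context qsetup begin

lemma small:
  assumes eps: "\<exists>\<epsilon>>0. \<forall>a. 0 < a \<and> a < \<epsilon> \<longrightarrow> mgfq M Y q a < \<infinity>"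
    and V: "V > 0"
  shows "\<exists>a>0. G a \<le> ennreal V"
proof -
  obtain \<epsilon> where e: "\<epsilon> > 0" "\<And>a. 0 < a \<Longrightarrow> a < \<epsilon> \<Longrightarrow> mgfq M Y q a < \<infinity>" using eps by auto
  define a0 where "a0 = \<epsilon>/2"
  have a0: "a0 > 0" "mgfq M Y q a0 < \<infinity>" using e unfolding a0_def by auto
  define K where "K = enn2real (mgfq M Y q a0)"
  have K: "mgfq M Y q a0 = ennreal K" "K \<ge> 0" using a0 unfolding K_def by (auto simp: less_top)
  define a where "a = min a0 ((V/(1+K)) powr (1-q))"
  have apos: "a > 0" using a0 V K unfolding a_def by auto
  have aa0: "a \<le> a0" unfolding a_def by simp
  have "a powr (1/(1-q)) \<le> ((V/(1+K)) powr (1-q)) powr (1/(1-q))"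
    using apos q1 unfolding a_def by (intro powr_mono2) auto
  also have "\<dots> = V/(1+K)" using q1 V K by (simp add: powr_powr)
  finally have ap: "a powr (1/(1-q)) * (1+K) \<le> V" using K by (simp add: field_simps)
  have "mgfq M Y q a \<le> (\<integral>\<^sup>+\<omega>. 1 + expq (2-q) (a0 * Y \<omega>) \<partial>M)"
    unfolding mgfq_def
  proof (intro nn_integral_mono)
    fix \<omega> show "expq (2-q) (a * Y \<omega>) \<le> 1 + expq (2-q) (a0 * Y \<omega>)"
    proof (cases "Y \<omega> \<le> 0")
      case True
      hence "a * Y \<omega> \<le> 0" using apos by (simp add: mult_nonneg_nonpos)
      hence "expq (2-q) (a * Y \<omega>) \<le> 1" by (rule expq_star_le1[OF q0 q1])
      thus ?thesis by (metis add.commute add_increasing2 zero_le)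
    next
      case False
      hence "a * Y \<omega> \<le> a0 * Y \<omega>" using aa0 by (simp add: mult_right_mono)
      hence "expq (2-q) (a * Y \<omega>) \<le> expq (2-q) (a0 * Y \<omega>)" by (rule expq_star_mono[OF q0 q1])
      thus ?thesis by (metis add.commute add_increasing2 zero_le)
    qed
  qed
  also have "\<dots> = 1 + ennreal K"
    by (subst nn_integral_add) (auto simp: K(1)[symmetric] mgfq_def emeasure_space_1)
  finally have "G a \<le> ennreal (a powr (1/(1-q))) * (1 + ennreal K)"
    using apos by (simp add: G_eq mult_left_mono)
  also have "\<dots> = ennreal (a powr (1/(1-q)) * (1+K))"
    using K by (simp add: ennreal_mult'')
  also have "\<dots> \<le> ennreal V" using ap by (simp add: ennreal_leI)
  finally show ?thesis using apos by blast
qed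

lemma hq_tendsto:
  assumes "u \<longlonglongrightarrow> s" "s > 0" "\<And>k. u k > 0" "\<And>k. 1/(u k) - (1-q)*y > 0" "1/s - (1-q)*y > 0"
  shows "(\<lambda>k. hq q (u k) y) \<longlonglongrightarrow> hq q s y"
proof -
  have "(\<lambda>k. ennreal ((1/(u k) - (1-q)*y) powr (-1/(1-q)))) \<longlonglongrightarrow> ennreal ((1/s - (1-q)*y) powr (-1/(1-q)))"
    using assms by (intro tendsto_ennrealI tendsto_intros) auto
  thus ?thesis using assms unfolding hq_def by simp
qed

lemma ivt:
  assumes eps: "\<exists>\<epsilon>>0. \<forall>a. 0 < a \<and> a < \<epsilon> \<longrightarrow> mgfq M Y q a < \<infinity>"
    and T: "T > 0" "ereal T < theta_bar M Y q"
  shows "\<exists>a\<in>admiss M Y q. thetaq M Y q a = T"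
proof -
  obtain b where b: "b \<in> admiss M Y q" "T < thetaq M Y q b"
    using T(2) unfolding theta_bar_def less_SUP_iff by auto
  define p where "p = 1/(1-q)"
  have p: "p > 0" unfolding p_def using q1 by simp
  define V where "V = T powr p"
  have Vpos: "V > 0" unfolding V_def using T by simp
  have Gb: "G b > ennreal V"
  proof -
    have "V < thetaq M Y q b powr p" unfolding V_def using T b p by (intro powr_less_mono2) auto
    thus ?thesis using theta_G(2)[OF b(1)] Vpos unfolding p_def by (simp add: ennreal_less_iff)
  qed
  have Gbfin: "G b < \<infinity>" using b by (simp add: admiss_iff)
  define L where "L = {a. 0 < a \<and> G a \<le> ennreal V}"
  have Lb: "\<And>a. a \<in> L \<Longrightarrow> a < b"
  proof (rule ccontr)
    fix a assume a: "a \<in> L" "\<not> a < b"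
    hence "G b \<le> G a" using b by (intro G_mono) (auto simp: admiss_def)
    thus False using a Gb unfolding L_def by auto
  qed
  obtain a0 where a0: "a0 > 0" "G a0 \<le> ennreal V" using small[OF eps Vpos] by auto
  have a0L: "a0 \<in> L" using a0 unfolding L_def by auto
  have bdd: "bdd_above L" using Lb by (auto intro!: bdd_aboveI[of _ b] less_imp_le)
  define s where "s = Sup L"
  have a0s: "a0 \<le> s" unfolding s_def using a0L bdd by (rule cSup_upper)
  have sb: "s \<le> b" unfolding s_def using a0L Lb by (intro cSup_least) (auto intro: less_imp_le)
  have spos: "s > 0" using a0 a0s by simp
  have sadm: "s \<in> admiss M Y q" using admiss_down[OF b(1) spos sb] .
  have AEs: "AE \<omega> in M. 1/s - (1-q) * Y \<omega> > 0" using AE_fin[OF sadm] .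
  have AEb: "AE \<omega> in M. 1/b - (1-q) * Y \<omega> > 0" using AE_fin[OF b(1)] .
  have below: "\<And>a. 0 < a \<Longrightarrow> a < s \<Longrightarrow> G a \<le> ennreal V"
  proof -
    fix a assume a: "0 < a" "a < s"
    then obtain l where l: "l \<in> L" "a < l" using less_cSup_iff[OF _ bdd] a0L unfolding s_def by blast
    hence "G a \<le> G l" using a by (intro G_mono) auto
    thus "G a \<le> ennreal V" using l unfolding L_def by auto
  qed
  have GsV: "G s \<le> ennreal V"
  proof -
    define u where "u k = s * (1 - 1/(real k + 2))" for k :: nat
    have upos: "u k > 0" for k unfolding u_def using spos by (simp add: field_simps add_pos_nonneg)
    have uls: "u k < s" for k unfolding u_def using spos by (simp add: field_simps)
    have umono: "u k \<le> u l" if "k \<le> l" for k l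
      unfolding u_def using spos that by (auto intro!: mult_left_mono simp: frac_le)
    have ulim: "u \<longlonglongrightarrow> s"
    proof -
      have "(\<lambda>k. 1/(real k + 2)) \<longlonglongrightarrow> 0"
        by real_asymp
      hence "(\<lambda>k. s * (1 - 1/(real k + 2))) \<longlonglongrightarrow> s * (1 - 0)" by (intro tendsto_intros)
      thus ?thesis unfolding u_def by simp
    qed
    have inc: "incseq (\<lambda>k \<omega>. hq q (u k) (Y \<omega>))"
      by (auto intro!: incseq_SucI le_funI hq_mono[OF q0 q1] upos umono)
    have "G s \<le> (\<integral>\<^sup>+\<omega>. (SUP k. hq q (u k) (Y \<omega>)) \<partial>M)"
      unfolding G_def
    proof (rule nn_integral_mono_AE)
      show "AE \<omega> in M. hq q s (Y \<omega>) \<le> (SUP k. hq q (u k) (Y \<omega>))"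
        using AEs
      proof eventually_elim
        case (elim \<omega>)
        have pos: "1/(u k) - (1-q) * Y \<omega> > 0" for k
        proof -
          have "1/s \<le> 1/(u k)" using upos uls by (simp add: frac_le less_imp_le)
          thus ?thesis using elim by simp
        qed
        have "(\<lambda>k. hq q (u k) (Y \<omega>)) \<longlonglongrightarrow> hq q s (Y \<omega>)"
          by (rule hq_tendsto[OF ulim spos upos pos elim])
        thus ?case by (rule LIMSEQ_le_const2) (auto intro!: exI[of _ 0] SUP_upper)
      qed
    qed
    also have "\<dots> = (SUP k. G (u k))" unfolding G_def
      by (rule nn_integral_monotone_convergence_SUP[OF inc]) auto
    also have "\<dots> \<le> ennreal V" using below upos uls by (auto intro!: SUP_least)
    finally show ?thesis .
  qed
  have VGs: "ennreal V \<le> G s"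
  proof (rule ccontr)
    assume "\<not> ennreal V \<le> G s"
    hence Gs: "G s < ennreal V" by simp
    have slb: "s < b" using sb Gs Gb by (cases "s = b") auto
    define w where "w k = s + (b - s)/(real k + 1)" for k :: nat
    have wgt: "w k > s" for k unfolding w_def using slb by simp
    have wpos: "w k > 0" for k using wgt spos less_trans by blast
    have wb: "w k \<le> b" for k unfolding w_def using slb by (simp add: field_simps mult_right_mono)
    have wmono: "w l \<le> w k" if "k \<le> l" for k l
      unfolding w_def using slb that by (auto intro!: divide_left_mono)
    have wlim: "w \<longlonglongrightarrow> s"
    proof -
      have "(\<lambda>k. (b - s)/(real k + 1)) \<longlonglongrightarrow> 0"
        by real_asymp
      hence "(\<lambda>k. s + (b - s)/(real k + 1)) \<longlonglongrightarrow> s + 0" by (intro tendsto_intros)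
      thus ?thesis unfolding w_def by simp
    qed
    have Gw: "G (w k) > ennreal V" for k
    proof (rule ccontr)
      assume "\<not> G (w k) > ennreal V"
      hence "w k \<in> L" unfolding L_def using wpos by (simp add: not_less)
      hence "w k \<le> s" unfolding s_def using bdd by (rule cSup_upper)
      thus False using wgt[of k] by simp
    qed
    have dec: "decseq (\<lambda>k \<omega>. hq q (w k) (Y \<omega>))"
      by (auto intro!: decseq_SucI le_funI hq_mono[OF q0 q1] wpos wmono)
    have wfin: "(\<integral>\<^sup>+\<omega>. hq q (w k) (Y \<omega>) \<partial>M) < \<infinity>" for k
      using G_mono[OF wpos wb, of k] Gbfin unfolding G_def by simp
    have wf0: "(\<integral>\<^sup>+\<omega>. hq q (w 0) (Y \<omega>) \<partial>M) < \<top>" using wfin[of 0] by simp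
    have "ennreal V \<le> (INF k. G (w k))" by (intro INF_greatest) (simp add: Gw less_imp_le)
    also have "\<dots> = (\<integral>\<^sup>+\<omega>. (INF k. hq q (w k) (Y \<omega>)) \<partial>M)" unfolding G_def
      by (rule nn_integral_monotone_convergence_INF_decseq[OF dec, symmetric, where i=0]) (auto simp: top_unique intro: wf0)
    also have "\<dots> \<le> G s" unfolding G_def
    proof (rule nn_integral_mono_AE)
      show "AE \<omega> in M. (INF k. hq q (w k) (Y \<omega>)) \<le> hq q s (Y \<omega>)"
        using AEs AEb
      proof eventually_elim
        case (elim \<omega>)
        have pos: "1/(w k) - (1-q) * Y \<omega> > 0" for k
        proof -
          have "1/b \<le> 1/(w k)" using wpos wb by (simp add: frac_le)
          thus ?thesis using elim by simp
        qed
        have "(\<lambda>k. hq q (w k) (Y \<omega>)) \<longlonglongrightarrow> hq q s (Y \<omega>)"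
          by (rule hq_tendsto[OF wlim spos wpos pos elim(1)])
        thus ?case by (rule LIMSEQ_le_const) (auto intro!: exI[of _ 0] INF_lower)
      qed
    qed
    finally show False using Gs by simp
  qed
  have "G s = ennreal V" using GsV VGs by simp
  hence "thetaq M Y q s = V powr (1-q)" using theta_G(1)[OF sadm] Vpos by simp
  also have "\<dots> = T" unfolding V_def p_def using T q1 by (simp add: powr_powr)
  finally show ?thesis using sadm by blast
qed

end


lemma amgm_bound:
  fixes y :: "nat \<Rightarrow> real" and n :: nat and u p :: real
  assumes n: "n \<ge> 1" and y: "\<And>k. k \<in> {1..n} \<Longrightarrow> y k > 0"
    and mean: "(\<Sum>k=1..n. y k) / real n \<le> u" and p: "p > 0"
  shows "u > 0" "(u powr (-p)) ^ n \<le> (\<Prod>k=1..n. y k powr (-p))"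
proof -
  have "(\<Sum>k=1..n. y k) > 0" using n y by (intro sum_pos) auto
  hence mpos: "(\<Sum>k=1..n. y k) / real n > 0" using n by simp
  thus u: "u > 0" using mean by simp
  define P where "P = (\<Prod>k=1..n. y k)"
  have Ppos: "P > 0" unfolding P_def using y by (intro prod_pos) auto
  have "(\<Sum>k\<in>{1..n}. y k / card {1..n}) \<ge> (\<Prod>k\<in>{1..n}. y k) powr (1 / card {1..n})"
    using n y by (intro arith_geom_mean) (auto intro: less_imp_le)
  hence "P powr (1/real n) \<le> (\<Sum>k=1..n. y k) / real n" unfolding P_def
    by (simp add: sum_divide_distrib)
  hence Pu: "P powr (1/real n) \<le> u" using mean by simp
  have "P = (P powr (1/real n)) ^ n" using Ppos n by (simp add: powr_power)
  also have "\<dots> \<le> u ^ n" using Pu by (intro power_mono) auto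
  finally have "P \<le> u ^ n" .
  hence "(u ^ n) powr (-p) \<le> P powr (-p)" using Ppos p by (intro powr_mono2') auto
  moreover have "(u ^ n) powr (-p) = (u powr (-p)) ^ n"
    using u by (simp add: powr_realpow[symmetric] powr_powr powr_power mult.commute)
  moreover have "P powr (-p) = (\<Prod>k=1..n. y k powr (-p))" unfolding P_def by (rule prod_powr_distrib)
  ultimately show "(u powr (-p)) ^ n \<le> (\<Prod>k=1..n. y k powr (-p))" by simp
qed



lemma markov:
  fixes M :: "'a measure" and X :: "nat \<Rightarrow> 'a \<Rightarrow> real" and q x a :: real and n :: nat
  assumes P: "prob_space M"
    and ind: "prob_space.indep_vars M (\<lambda>_. borel) X UNIV"
    and dist: "\<And>i. distr M borel (X i) = distr M borel (X 1)"
    and q0: "0 < q" and q1: "q < 1"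
    and n: "n \<ge> 1"
    and adm: "a \<in> admiss M (X 1) q"
  shows "emeasure M {\<omega> \<in> space M. (\<Sum>k=1..n. X k \<omega>) / real n \<ge> x}
           \<le> expq q (- (thetaq M (X 1) q a * x - lnq q (enn2real (mgfq M (X 1) q a)))) ^ n"
proof -
  interpret prob_space M by (rule P)
  have Xm[measurable]: "X i \<in> borel_measurable M" for i
    using ind unfolding indep_vars_def by auto
  define E where "E = {\<omega> \<in> space M. (\<Sum>k=1..n. X k \<omega>) / real n \<ge> x}"
  have Em[measurable]: "E \<in> sets M" unfolding E_def by measurable
  define c where "c = 1 - q"
  define p where "p = 1/(1-q)"
  have c: "c > 0" and p: "p > 0" and pc: "p * c = 1" using q0 q1 unfolding c_def p_def by auto
  define m where "m = mgfq M (X 1) q a"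
  have apos: "a > 0" and mfin: "m < \<infinity>" and mpos: "m > 0" using adm unfolding admiss_def m_def by auto
  define r where "r = enn2real m"
  have rpos: "r > 0" using mfin mpos unfolding r_def by (simp add: enn2real_positive_iff)
  have mr: "m = ennreal r" using mfin unfolding r_def by (simp add: less_top)
  define Z where "Z k \<omega> = expq (2-q) (a * X k \<omega>)" for k \<omega>
  have Zm[measurable]: "Z k \<in> borel_measurable M" for k unfolding Z_def by measurable
  have intZ: "(\<integral>\<^sup>+\<omega>. Z k \<omega> \<partial>M) = m" for k
  proof -
    have "(\<integral>\<^sup>+\<omega>. Z k \<omega> \<partial>M) = (\<integral>\<^sup>+y. expq (2-q) (a * y) \<partial>distr M borel (X k))"
      unfolding Z_def by (subst nn_integral_distr) auto
    also have "\<dots> = (\<integral>\<^sup>+y. expq (2-q) (a * y) \<partial>distr M borel (X 1))" by (simp add: dist[of k])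
    also have "\<dots> = m" unfolding m_def mgfq_def by (subst nn_integral_distr) auto
    finally show ?thesis .
  qed
  have indZ: "indep_vars (\<lambda>_. borel) Z {1..n}"
  proof -
    have "indep_vars (\<lambda>_. borel) (\<lambda>i \<omega>. (\<lambda>y. expq (2-q) (a * y)) (X i \<omega>)) {1..n}"
      by (rule indep_vars_compose2[OF indep_vars_subset[OF ind]]) auto
    thus ?thesis unfolding Z_def by simp
  qed
  have prodZ: "(\<integral>\<^sup>+\<omega>. (\<Prod>k\<in>{1..n}. Z k \<omega>) \<partial>M) = m ^ n"
    using indep_vars_nn_integral[OF _ indZ] by (simp add: intZ)
  define B where "B = (if 1 - c*a*x > 0 then ennreal (((1 - c*a*x) powr (-p)) ^ n) else \<top>)"
  have Zpos: "Z k \<omega> > 0" for k \<omega> unfolding Z_def by (rule expq_pos[OF q0 q1])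
  have pt: "B \<le> (\<Prod>k\<in>{1..n}. Z k \<omega>)" if \<omega>: "\<omega> \<in> E" for \<omega>
  proof (cases "\<exists>k\<in>{1..n}. 1 - c * (a * X k \<omega>) \<le> 0")
    case True
    then obtain k where k: "k \<in> {1..n}" "1 - c * (a * X k \<omega>) \<le> 0" by auto
    have "Z k \<omega> = \<top>" using k q0 q1 unfolding Z_def c_def by (simp add: expq_star)
    hence "(\<Prod>k\<in>{1..n}. Z k \<omega>) = \<top>" using k Zpos
      by (subst ennreal_prod_eq_top) (auto simp: less_le)
    thus ?thesis by simp
  next
    case False
    define y where "y k = 1 - c * (a * X k \<omega>)" for k
    have ypos: "\<And>k. k \<in> {1..n} \<Longrightarrow> y k > 0" using False unfolding y_def by (auto simp: not_le)
    have "(\<Sum>k=1..n. y k) = real n - c * a * (\<Sum>k=1..n. X k \<omega>)"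
      unfolding y_def by (simp add: sum_subtractf sum_distrib_left mult.assoc)
    hence "(\<Sum>k=1..n. y k) / real n = 1 - c * a * ((\<Sum>k=1..n. X k \<omega>) / real n)"
      using n by (simp add: field_simps)
    also have "\<dots> \<le> 1 - c * a * x"
    proof -
      have "x \<le> (\<Sum>k=1..n. X k \<omega>) / real n" using \<omega> unfolding E_def by simp
      hence "c * a * x \<le> c * a * ((\<Sum>k=1..n. X k \<omega>) / real n)"
        using c apos by (intro mult_left_mono) auto
      thus ?thesis by linarith
    qed
    finally have mean: "(\<Sum>k=1..n. y k) / real n \<le> 1 - c * a * x" .
    note am = amgm_bound[OF n ypos mean p]
    have Zy: "Z k \<omega> = ennreal (y k powr (-p))" if "k \<in> {1..n}" for k
      using ypos[OF that] q0 q1 unfolding Z_def y_def c_def p_def by (simp add: expq_star)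
    have "(\<Prod>k\<in>{1..n}. Z k \<omega>) = ennreal (\<Prod>k=1..n. y k powr (-p))"
      by (simp add: Zy prod_ennreal[symmetric])
    moreover have "B = ennreal (((1 - c*a*x) powr (-p)) ^ n)" using am(1) unfolding B_def by simp
    ultimately show ?thesis using am(2) by (simp add: ennreal_leI)
  qed
  have "B * emeasure M E = (\<integral>\<^sup>+\<omega>. B * indicator E \<omega> \<partial>M)" using nn_integral_cmult_indicator[OF Em, of B] by simp
  also have "\<dots> \<le> (\<integral>\<^sup>+\<omega>. (\<Prod>k\<in>{1..n}. Z k \<omega>) \<partial>M)"
    using pt by (intro nn_integral_mono) (auto simp: indicator_def)
  also have "\<dots> = ennreal (r ^ n)" using prodZ mr rpos by (simp add: ennreal_power)
  finally have key: "B * emeasure M E \<le> ennreal (r ^ n)" .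
  define th where "th = thetaq M (X 1) q a"
  have th: "th = r powr c * a" unfolding th_def thetaq_def r_def m_def c_def by simp
  have base: "1 + (1-q) * (- (th * x - lnq q r)) = r powr c * (1 - c*a*x)"
    unfolding th lnq_def c_def[symmetric] using c by (simp add: field_simps)
  show ?thesis
  proof (cases "1 - c*a*x > 0")
    case False
    hence "B = \<top>" unfolding B_def by simp
    hence "emeasure M E = 0" using key by (auto simp: ennreal_top_mult top_unique split: if_splits)
    thus ?thesis unfolding E_def[symmetric] by simp
  next
    case True
    define t where "t = (1 - c*a*x) powr (-p)"
    have tpos: "t > 0" unfolding t_def using True by simp
    have B: "B = ennreal (t ^ n)" unfolding B_def t_def using True by simp
    have "emeasure M E = ennreal (measure M E)" by (simp add: emeasure_eq_measure)
    with key B have "ennreal (t ^ n * measure M E) \<le> ennreal (r ^ n)"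
      by (simp add: ennreal_mult'')
    hence "t ^ n * measure M E \<le> r ^ n" using rpos by (simp add: ennreal_le_iff)
    hence "measure M E \<le> r ^ n / t ^ n" using tpos by (simp add: field_simps)
    also have "r ^ n / t ^ n = (r * (1 - c*a*x) powr p) ^ n"
      unfolding t_def using True by (simp add: power_divide powr_minus divide_inverse power_inverse power_mult_distrib)
    finally have mE: "measure M E \<le> (r * (1 - c*a*x) powr p) ^ n" .
    have "expq q (- (th * x - lnq q r)) = ennreal ((max 0 (r powr c * (1 - c*a*x))) powr (1/(1-q)))"
      by (simp only: expq_q[OF q0 q1] base)
    also have "max 0 (r powr c * (1 - c*a*x)) = r powr c * (1 - c*a*x)"
      using True rpos by simp
    finally have "expq q (- (th * x - lnq q r)) = ennreal ((r powr c * (1 - c*a*x)) powr p)"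
      unfolding p_def .
    also have "(r powr c * (1 - c*a*x)) powr p = r * (1 - c*a*x) powr p"
      using rpos True pc by (simp add: powr_mult powr_powr mult.commute[of c p])
    finally have "expq q (- (th * x - lnq q r)) ^ n = ennreal ((r * (1 - c*a*x) powr p) ^ n)"
      using rpos by (simp add: ennreal_power)
    thus ?thesis unfolding E_def[symmetric] th_def[symmetric] r_def[symmetric] m_def[symmetric]
      using mE \<open>emeasure M E = ennreal (measure M E)\<close> by (simp add: ennreal_leI)
  qed
qed



lemma expq_q_mono:
  assumes "0 < q" "q < 1" "u \<le> v"
  shows "expq q u \<le> expq q v"
proof -
  have "(1-q)* u \<le> (1-q)* v" using assms by (intro mult_left_mono) auto
  hence "max 0 (1+(1-q)* u) \<le> max 0 (1+(1-q)* v)" by auto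
  hence "(max 0 (1+(1-q)* u)) powr (1/(1-q)) \<le> (max 0 (1+(1-q)* v)) powr (1/(1-q))"
    using assms by (intro powr_mono2) auto
  thus ?thesis using assms by (simp add: expq_q ennreal_leI)
qed

theorem theorem1:
  fixes M :: "'a measure" and X :: "nat \<Rightarrow> 'a \<Rightarrow> real" and q x :: real and n :: nat
  assumes "prob_space M"
    and "prob_space.indep_vars M (\<lambda>_. borel) X UNIV"
    and "\<And>i. distr M borel (X i) = distr M borel (X 1)"
    and "0 < q" and "q < 1"
    and "\<exists>\<epsilon>>0. \<forall>a. 0 < a \<and> a < \<epsilon> \<longrightarrow> mgfq M (X 1) q a < \<infinity>"
    and "n \<ge> 1"
  shows "emeasure M {\<omega> \<in> space M. (\<Sum>k=1..n. X k \<omega>) / real n \<ge> x}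
           \<le> (expq_ereal q (- Iq M (X 1) q x)) ^ n"
proof -
  interpret prob_space M by (rule assms(1))
  have Xm[measurable]: "X i \<in> borel_measurable M" for i
    using assms(2) unfolding indep_vars_def by auto
  interpret Q: qsetup M "X 1" q by unfold_locales (auto simp: assms(4,5))
  define Pr where "Pr = emeasure M {\<omega> \<in> space M. (\<Sum>k=1..n. X k \<omega>) / real n \<ge> x}"
  define S where "S = {\<theta>. 0 < \<theta> \<and> ereal \<theta> < theta_bar M (X 1) q}"
  define g where "g \<theta> = \<theta> * x - Phiq M (X 1) q \<theta>" for \<theta>
  have each: "Pr \<le> expq q (- g \<theta>) ^ n" if thS: "\<theta> \<in> S" for \<theta>
  proof -
    obtain a where a: "a \<in> admiss M (X 1) q" "thetaq M (X 1) q a = \<theta>"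
      using Q.ivt[OF assms(6)] thS unfolding S_def by auto
    have "(THE a. a \<in> admiss M (X 1) q \<and> thetaq M (X 1) q a = \<theta>) = a"
      using a Q.theta_inj by (intro the1_equality) auto
    hence "Phiq M (X 1) q \<theta> = lnq q (enn2real (mgfq M (X 1) q a))" unfolding Phiq_def by simp
    thus ?thesis using markov[OF assms(1,2,3,4,5,7) a(1), of x] a(2)
      unfolding Pr_def g_def by simp
  qed
  have I: "Iq M (X 1) q x = (SUP \<theta>\<in>S. ereal (g \<theta>))" unfolding Iq_def S_def g_def by simp
  show ?thesis unfolding Pr_def[symmetric] I
  proof (cases "(SUP \<theta>\<in>S. ereal (g \<theta>))" rule: ereal_cases)
    case MInf
    thus "Pr \<le> expq_ereal q (- (SUP \<theta>\<in>S. ereal (g \<theta>))) ^ n"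
      using assms(7) by (simp add: expq_ereal_def)
  next
    case PInf
    then obtain \<theta> where th: "\<theta> \<in> S" "ereal (1/(1-q)) < ereal (g \<theta>)"
      using less_SUP_iff[of "ereal (1/(1-q))" "\<lambda>\<theta>. ereal (g \<theta>)" S] by auto
    have "1 + (1-q) * (- g \<theta>) < 0" using th(2) assms(4,5) by (simp add: field_simps)
    hence "expq q (- g \<theta>) = 0" using assms(4,5) by (simp add: expq_q)
    hence "Pr \<le> 0" using each[OF th(1)] assms(7) by (simp add: power_0_left)
    thus "Pr \<le> expq_ereal q (- (SUP \<theta>\<in>S. ereal (g \<theta>))) ^ n" by simp
  next
    case (real r)
    have bnd: "Pr \<le> expq q (- (r - 1/(real k + 1))) ^ n" for k
    proof -
      have "ereal (r - 1/(real k + 1)) < (SUP \<theta>\<in>S. ereal (g \<theta>))" using real by simp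
      then obtain \<theta> where th: "\<theta> \<in> S" "r - 1/(real k + 1) < g \<theta>" by (auto simp: less_SUP_iff)
      have "expq q (- g \<theta>) \<le> expq q (- (r - 1/(real k + 1)))"
        using th(2) assms(4,5) by (intro expq_q_mono) auto
      thus ?thesis using each[OF th(1)] by (meson order_trans power_mono zero_le)
    qed
    have lim: "(\<lambda>k. expq q (- (r - 1/(real k + 1))) ^ n) \<longlonglongrightarrow> expq q (- r) ^ n"
    proof -
      have h: "(\<lambda>k::nat. 1/(real k + 1)) \<longlonglongrightarrow> 0" by real_asymp
      define f where "f k = max 0 (1+(1-q)*(- (r - 1/(real k + 1))))" for k :: nat
      have h1: "f \<longlonglongrightarrow> max 0 (1+(1-q)*(- (r - 0)))" unfolding f_def
        by (intro tendsto_intros h)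
      have h2: "(\<lambda>k. f k powr (1/(1-q))) \<longlonglongrightarrow> (max 0 (1+(1-q)*(- (r - 0)))) powr (1/(1-q))"
        by (rule tendsto_powr'[OF h1 tendsto_const]) (use assms(4,5) in \<open>auto simp: f_def\<close>)
      have "(\<lambda>k. ennreal (f k powr (1/(1-q))) ^ n)
         \<longlonglongrightarrow> ennreal ((max 0 (1+(1-q)*(- (r - 0)))) powr (1/(1-q))) ^ n"
      proof -
        have "(\<lambda>k. ennreal ((f k powr (1/(1-q))) ^ n))
         \<longlonglongrightarrow> ennreal (((max 0 (1+(1-q)*(- (r - 0)))) powr (1/(1-q))) ^ n)"
          by (intro tendsto_power tendsto_ennrealI h2)
        thus ?thesis by (simp add: ennreal_power)
      qed
      thus ?thesis using assms(4,5) by (simp add: expq_q f_def)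
    qed
    have "Pr \<le> expq q (- r) ^ n" by (rule LIMSEQ_le_const[OF lim]) (use bnd in auto)
    thus "Pr \<le> expq_ereal q (- (SUP \<theta>\<in>S. ereal (g \<theta>))) ^ n"
      using real by (simp add: expq_ereal_def)
  qed
qed

end
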